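(* Let $k\geq 2$, $d\geq 2$, let $v_1,\dots,v_k\in\mathbb{R}^d$ be nonzero vectors and $\gamma_1,\dots,\gamma_k>0$ with $\sum_{i=1}^k\gamma_i v_i=0$. Then there exists a bi-partitioning $c_1\dot\cup c_2=\{1,\dots,k\}$ into nonempty sets such that $$\max_{i\in c_1,j\in c_2}\alpha(v_i,v_j)\leq\cos\Big(\frac{\pi}{k-1}\Big).$$
   Context: For nonzero $a,b\in\mathbb{R}^d$, the cosine similarity is $\alpha(a,b)=\frac{\langle a,b\rangle}{\|a\|\|b\|}$. *)

theory Defs
  imports "HOL-Analysis.Analysis"
begin

definition cos_sim :: "'a::real_inner \<Rightarrow> 'a \<Rightarrow> real" where
  "cos_sim a b = inner a b / (norm a * norm b)"

end

theory Submission
  imports Defs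
begin

lemma unit_inner_bounds:
  fixes a b :: "'a::real_inner"
  assumes "norm a = 1" "norm b = 1"
  shows "-1 \<le> inner a b" "inner a b \<le> 1"
  using Cauchy_Schwarz_ineq2[of a b] assms by auto

lemma sph_tri:
  fixes a b c :: "'a::real_inner"
  assumes a: "norm a = 1" and b: "norm b = 1" and c: "norm c = 1"
  shows "arccos (inner a c) \<le> arccos (inner a b) + arccos (inner b c)"
proof -
  define x where "x = inner a b"
  define y where "y = inner b c"
  have x1: "-1 \<le> x" "x \<le> 1" using unit_inner_bounds[OF a b] x_def by auto
  have y1: "-1 \<le> y" "y \<le> 1" using unit_inner_bounds[OF b c] y_def by auto
  have ac1: "-1 \<le> inner a c" "inner a c \<le> 1" using unit_inner_bounds[OF a c] by auto
  define al where "al = arccos x"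
  define be where "be = arccos y"
  have al: "0 \<le> al" "al \<le> pi" using arccos_bounded[OF x1] al_def by auto
  have be: "0 \<le> be" "be \<le> pi" using arccos_bounded[OF y1] be_def by auto
  show ?thesis
  proof (cases "al + be \<le> pi")
    case False
    then show ?thesis using arccos_ubound[OF ac1] x_def y_def al_def be_def by auto
  next
    case True
    define p where "p = a - x *\<^sub>R b"
    define q where "q = c - y *\<^sub>R b"
    have bb: "inner b b = 1" using b by (simp add: dot_square_norm)
    have aa: "inner a a = 1" using a by (simp add: dot_square_norm)
    have cc: "inner c c = 1" using c by (simp add: dot_square_norm)
    have pq: "inner p q = inner a c - x * y"
      unfolding p_def q_def by (simp add: inner_diff_left inner_diff_right bb x_def y_def inner_commute algebra_simps)
    have pp: "norm p = sqrt (1 - x^2)"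
    proof -
      have "inner p p = 1 - x^2"
        unfolding p_def by (simp add: inner_diff_left inner_diff_right bb aa x_def inner_commute algebra_simps power2_eq_square)
      then show ?thesis by (simp add: norm_eq_sqrt_inner)
    qed
    have qq: "norm q = sqrt (1 - y^2)"
    proof -
      have "inner q q = 1 - y^2"
        unfolding q_def by (simp add: inner_diff_left inner_diff_right bb cc y_def inner_commute algebra_simps power2_eq_square)
      then show ?thesis by (simp add: norm_eq_sqrt_inner)
    qed
    have cs: "\<bar>inner p q\<bar> \<le> norm p * norm q" by (rule Cauchy_Schwarz_ineq2)
    have "cos (al + be) = x * y - sqrt (1 - x^2) * sqrt (1 - y^2)"
      unfolding cos_add al_def be_def using x1 y1 by (simp add: sin_arccos)
    also have "\<dots> \<le> inner a c" using cs unfolding pq pp qq by (simp add: abs_le_iff)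
    finally have le: "cos (al + be) \<le> inner a c" .
    have "arccos (inner a c) \<le> arccos (cos (al + be))"
      apply (rule arccos_le_arccos) using le ac1 by auto
    also have "\<dots> = al + be" using True al be by (simp add: arccos_cos)
    finally show ?thesis using al_def be_def x_def y_def by simp
  qed
qed

lemma rotate_step:
  fixes w u :: "'a::real_inner"
  assumes w: "norm w = 1" and u: "norm u = 1"
    and ph: "0 < arccos (inner w u)" "arccos (inner w u) < pi"
    and t: "0 \<le> t" "t \<le> arccos (inner w u)"
  shows "\<exists>w'. norm w' = 1 \<and> arccos (inner w' w) = t \<and> arccos (inner w' u) = arccos (inner w u) - t"
proof -
  define f where "f = arccos (inner w u)"
  have wu1: "-1 \<le> inner w u" "inner w u \<le> 1" using unit_inner_bounds[OF w u] by auto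
  have cf: "cos f = inner w u" using f_def wu1 by simp
  have sf: "sin f > 0" using ph f_def by (simp add: sin_gt_zero)
  define p where "p = (1 / sin f) *\<^sub>R (u - cos f *\<^sub>R w)"
  have ww: "inner w w = 1" using w by (simp add: dot_square_norm)
  have uu: "inner u u = 1" using u by (simp add: dot_square_norm)
  have sc: "(sin f)^2 = 1 - (cos f)^2" by (simp add: sin_squared_eq)
  have wp: "inner w p = 0"
    unfolding p_def using cf ww by (simp add: inner_diff_right)
  have up: "inner u p = sin f"
  proof -
    have "inner u p = (1 - (cos f)^2) / sin f"
      unfolding p_def using cf uu by (simp add: inner_diff_right inner_commute power2_eq_square)
    also have "\<dots> = sin f" using sc sf by (simp add: power2_eq_square field_simps)
    finally show ?thesis .
  qed
  have pp: "inner p p = 1"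
  proof -
    have "inner p p = (1 / sin f) * inner p (u - cos f *\<^sub>R w)" unfolding p_def[of] 
      by (simp add: p_def)
    also have "\<dots> = (1 / sin f) * (inner p u - cos f * inner p w)" by (simp add: inner_diff_right)
    also have "\<dots> = 1" using up wp sf by (simp add: inner_commute)
    finally show ?thesis .
  qed
  define w' where "w' = cos t *\<^sub>R w + sin t *\<^sub>R p"
  have "inner w' w' = (cos t)^2 + (sin t)^2"
    unfolding w'_def using wp by (simp add: inner_add_left inner_add_right ww pp inner_commute[of p w] power2_eq_square)
  then have n1: "norm w' = 1" by (simp add: norm_eq_sqrt_inner)
  have "inner w' w = cos t" unfolding w'_def using wp by (simp add: inner_add_left ww inner_commute[of p w])
  then have e1: "arccos (inner w' w) = t" using t ph f_def by (simp add: arccos_cos)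
  have "inner w' u = cos t * cos f + sin t * sin f"
    unfolding w'_def using up by (simp add: inner_add_left cf inner_commute[of p u])
  also have "\<dots> = cos (f - t)" by (simp add: cos_diff)
  finally have "arccos (inner w' u) = f - t" using t ph f_def by (simp add: arccos_cos)
  then show ?thesis using n1 e1 f_def by blast
qed


theorem lemma3:
  fixes k :: nat and v :: "nat \<Rightarrow> real ^ 'd" and \<gamma> :: "nat \<Rightarrow> real"
  assumes "k \<ge> 2" and "CARD('d) \<ge> 2"
    and "\<And>i. i \<in> {1..k} \<Longrightarrow> v i \<noteq> 0"
    and "\<And>i. i \<in> {1..k} \<Longrightarrow> \<gamma> i > 0"
    and "(\<Sum>i=1..k. \<gamma> i *\<^sub>R v i) = 0"
  shows "\<exists>c1 c2. c1 \<union> c2 = {1..k} \<and> c1 \<inter> c2 = {} \<and> c1 \<noteq> {} \<and> c2 \<noteq> {} \<and>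
           (MAX (i, j) \<in> c1 \<times> c2. cos_sim (v i) (v j)) \<le> cos (pi / (real k - 1))"
proof (rule ccontr)
  assume H: "\<not> ?thesis"
  note k2 = assms(1)
  define \<delta> where "\<delta> = pi / (real k - 1)"
  have k1: "real k - 1 \<ge> 1" using k2 by simp
  have d0: "\<delta> > 0" unfolding \<delta>_def using k1 by simp
  have dpi: "\<delta> \<le> pi" unfolding \<delta>_def using k1 by (simp add: divide_le_eq)
  have kd: "real k * \<delta> \<le> 2 * pi"
  proof -
    have "real k * \<delta> = pi * (real k / (real k - 1))" unfolding \<delta>_def by simp
    also have "\<dots> \<le> pi * 2" using k1 k2 by (intro mult_left_mono) (auto simp: divide_le_eq)
    finally show ?thesis by simp
  qed
  have kd2: "(real k - 1) * \<delta> = pi" unfolding \<delta>_def using k1 by simp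
  define u where "u i = (1 / norm (v i)) *\<^sub>R v i" for i
  have nu: "norm (u i) = 1" if "i \<in> {1..k}" for i
    using assms(3)[OF that] unfolding u_def by simp
  have cs: "cos_sim (v i) (v j) = inner (u i) (u j)" for i j
    unfolding u_def cos_sim_def by simp
  have edge: "\<exists>i\<in>S. \<exists>j\<in>{1..k} - S. inner (u i) (u j) > cos \<delta>"
    if S: "S \<subseteq> {1..k}" "S \<noteq> {}" "S \<noteq> {1..k}" for S
  proof -
    have ne: "{1..k} - S \<noteq> {}" using S by auto
    have "\<not> (MAX (i, j) \<in> S \<times> ({1..k} - S). cos_sim (v i) (v j)) \<le> cos \<delta>"
    proof
      assume M: "(MAX (i, j) \<in> S \<times> ({1..k} - S). cos_sim (v i) (v j)) \<le> cos \<delta>"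
      have "\<exists>c1 c2. c1 \<union> c2 = {1..k} \<and> c1 \<inter> c2 = {} \<and> c1 \<noteq> {} \<and> c2 \<noteq> {} \<and>
           (MAX (i, j) \<in> c1 \<times> c2. cos_sim (v i) (v j)) \<le> cos (pi / (real k - 1))"
        apply (rule exI[of _ S], rule exI[of _ "{1..k} - S"])
        using S ne M[unfolded \<delta>_def] by blast
      then show False using H by (rule notE[rotated])
    qed
    then have "(MAX (i, j) \<in> S \<times> ({1..k} - S). cos_sim (v i) (v j)) > cos \<delta>" by simp
    moreover have "finite (S \<times> ({1..k} - S))" using S finite_subset by blast
    moreover have "S \<times> ({1..k} - S) \<noteq> {}" using S ne by blast
    ultimately obtain p where "p \<in> S \<times> ({1..k} - S)" "(\<lambda>(i, j). cos_sim (v i) (v j)) p > cos \<delta>"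
      by (auto simp: Max_gr_iff)
    then show ?thesis using cs by auto
  qed
  define E where "E = (\<lambda>(i, j). arccos (inner (u i) (u j))) ` ({1..k} \<times> {1..k}) \<inter> {x. x < \<delta>}"
  define \<eta> where "\<eta> = Max (insert 0 E)"
  have finE: "finite E" unfolding E_def by simp
  have eta0: "\<eta> \<ge> 0" unfolding \<eta>_def using finE by simp
  have etad: "\<eta> < \<delta>" unfolding \<eta>_def using finE d0 by (simp add: Max_less_iff E_def)
  have edge_eta: "arccos (inner (u i) (u j)) \<le> \<eta>"
    if "i \<in> {1..k}" "j \<in> {1..k}" "inner (u i) (u j) > cos \<delta>" for i j
  proof -
    have b: "-1 \<le> inner (u i) (u j)" "inner (u i) (u j) \<le> 1"
      using unit_inner_bounds[OF nu[OF that(1)] nu[OF that(2)]] by auto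
    have "arccos (inner (u i) (u j)) < arccos (cos \<delta>)"
      by (rule arccos_less_arccos) (use that b in auto)
    also have "arccos (cos \<delta>) = \<delta>" using d0 dpi by (simp add: arccos_cos)
    finally have "arccos (inner (u i) (u j)) \<in> E" unfolding E_def using that by force
    then show ?thesis unfolding \<eta>_def using finE by simp
  qed
  have claim: "1 \<le> m \<longrightarrow> m \<le> k \<longrightarrow> (\<exists>S w. S \<subseteq> {1..k} \<and> card S = m \<and> norm w = 1 \<and>
      (\<forall>i\<in>S. arccos (inner w (u i)) \<le> (real m - 1) * \<eta> / 2))" for m
  proof (induction m)
    case 0
    then show ?case by simp
  next
    case (Suc m)
    show ?case
    proof (intro impI)
      assume m1: "Suc m \<le> k"
      show "\<exists>S w. S \<subseteq> {1..k} \<and> card S = Suc m \<and> norm w = 1 \<and>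
        (\<forall>i\<in>S. arccos (inner w (u i)) \<le> (real (Suc m) - 1) * \<eta> / 2)"
      proof (cases "m = 0")
        case True
        have "1 \<in> {1..k}" using k2 by simp
        then show ?thesis using True nu[of 1]
          by (intro exI[of _ "{1}"] exI[of _ "u 1"]) (auto simp: dot_square_norm)
      next
        case False
        then obtain S w where S: "S \<subseteq> {1..k}" "card S = m" "norm w = 1"
          "\<forall>i\<in>S. arccos (inner w (u i)) \<le> (real m - 1) * \<eta> / 2"
          using Suc.IH m1 by auto
        have "S \<noteq> {}" using S False by auto
        moreover have "S \<noteq> {1..k}" using S m1 by auto
        ultimately obtain i j where ij: "i \<in> S" "j \<in> {1..k} - S" "inner (u i) (u j) > cos \<delta>"
          using edge S(1) by blast
        have iK: "i \<in> {1..k}" using ij S by auto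
        have jK: "j \<in> {1..k}" using ij by auto
        have e: "arccos (inner (u i) (u j)) \<le> \<eta>" using edge_eta iK jK ij by blast
        define \<phi> where "\<phi> = arccos (inner w (u j))"
        have "\<phi> \<le> arccos (inner w (u i)) + arccos (inner (u i) (u j))"
          unfolding \<phi>_def by (rule sph_tri) (use S nu iK jK in auto)
        also have "\<dots> \<le> (real m - 1) * \<eta> / 2 + \<eta>" using S(4) ij(1) e by force
        finally have phi: "\<phi> \<le> (real m + 1) * \<eta> / 2" by (simp add: field_simps)
        have cardS': "card (insert j S) = Suc m" using S ij finite_subset by fastforce
        have S'K: "insert j S \<subseteq> {1..k}" using S jK by auto
        show ?thesis
        proof (cases "\<phi> \<le> real m * \<eta> / 2")
          case True
          show ?thesis
          proof (intro exI conjI)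
            show "insert j S \<subseteq> {1..k}" "card (insert j S) = Suc m" "norm w = 1" using S'K cardS' S by auto
            show "\<forall>ia\<in>insert j S. arccos (inner w (u ia)) \<le> (real (Suc m) - 1) * \<eta> / 2"
            proof
              fix x assume "x \<in> insert j S"
              then show "arccos (inner w (u x)) \<le> (real (Suc m) - 1) * \<eta> / 2"
              proof
                assume "x = j" then show ?thesis using True \<phi>_def by simp
              next
                assume "x \<in> S"
                then have "arccos (inner w (u x)) \<le> (real m - 1) * \<eta> / 2" using S by auto
                also have "\<dots> \<le> (real (Suc m) - 1) * \<eta> / 2" using eta0 by (simp add: field_simps)
                finally show ?thesis .
              qed
            qed
          qed
        next
          case False
          have "0 \<le> real m * \<eta> / 2" using eta0 by simp
          then have ph0: "0 < \<phi>" using False by linarith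
          have "\<phi> < (real m + 1) * \<delta> / 2"
          proof -
            have "(real m + 1) * \<eta> < (real m + 1) * \<delta>"
              using etad by (intro mult_strict_left_mono) auto
            then show ?thesis using phi by linarith
          qed
          also have "\<dots> \<le> real k * \<delta> / 2" using m1 d0
            by (intro divide_right_mono mult_right_mono) auto
          also have "\<dots> \<le> pi" using kd by simp
          finally have phpi: "\<phi> < pi" .
          have tle: "\<eta> / 2 \<le> \<phi>"
          proof -
            have "1 * \<eta> \<le> real m * \<eta>" using eta0 \<open>m \<noteq> 0\<close> by (intro mult_right_mono) auto
            then have "\<eta> / 2 \<le> real m * \<eta> / 2" by simp
            then show ?thesis using False by simp
          qed
          obtain w' where w': "norm w' = 1" "arccos (inner w' w) = \<eta> / 2"
            "arccos (inner w' (u j)) = \<phi> - \<eta> / 2"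
            using rotate_step[OF S(3) nu[OF jK], of "\<eta>/2"] ph0 phpi tle eta0 \<phi>_def by auto
          show ?thesis
          proof (intro exI conjI)
            show "insert j S \<subseteq> {1..k}" "card (insert j S) = Suc m" "norm w' = 1" using S'K cardS' w' by auto
            show "\<forall>ia\<in>insert j S. arccos (inner w' (u ia)) \<le> (real (Suc m) - 1) * \<eta> / 2"
            proof
              fix x assume "x \<in> insert j S"
              then show "arccos (inner w' (u x)) \<le> (real (Suc m) - 1) * \<eta> / 2"
              proof
                assume "x = j" then show ?thesis using w'(3) phi by (simp add: field_simps)
              next
                assume xS: "x \<in> S"
                have "arccos (inner w' (u x)) \<le> arccos (inner w' w) + arccos (inner w (u x))"
                  by (rule sph_tri) (use S w' nu xS in auto)
                also have "\<dots> \<le> \<eta> / 2 + (real m - 1) * \<eta> / 2" using S xS w' by auto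
                also have "\<dots> = (real (Suc m) - 1) * \<eta> / 2" by (simp add: field_simps)
                finally show ?thesis .
              qed
            qed
          qed
        qed
      qed
    qed
  qed
  obtain S w where S: "S \<subseteq> {1..k}" "card S = k" "norm w = 1"
    "\<forall>i\<in>S. arccos (inner w (u i)) \<le> (real k - 1) * \<eta> / 2"
    using claim[of k] k2 by auto
  have SK: "S = {1..k}" using S by (simp add: card_subset_eq)
  have pos: "inner w (v i) > 0" if iK: "i \<in> {1..k}" for i
  proof -
    have b: "-1 \<le> inner w (u i)" "inner w (u i) \<le> 1"
      using unit_inner_bounds[OF S(3) nu[OF iK]] by auto
    have "arccos (inner w (u i)) \<le> (real k - 1) * \<eta> / 2" using S SK iK by auto
    also have "\<dots> < (real k - 1) * \<delta> / 2" using etad k1 by simp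
    also have "\<dots> = pi / 2" using kd2 by simp
    finally have lt: "arccos (inner w (u i)) < pi / 2" .
    have "inner w (u i) > 0"
    proof (rule ccontr)
      assume "\<not> inner w (u i) > 0"
      then have "arccos 0 \<le> arccos (inner w (u i))"
        using b by (intro arccos_le_arccos) auto
      then show False using lt by simp
    qed
    moreover have "v i = norm (v i) *\<^sub>R u i" using assms(3)[OF iK] unfolding u_def by simp
    ultimately show ?thesis using assms(3)[OF iK]
      by (metis inner_scaleR_right mult_pos_pos zero_less_norm_iff)
  qed
  have "inner w (\<Sum>i=1..k. \<gamma> i *\<^sub>R v i) = (\<Sum>i=1..k. \<gamma> i * inner w (v i))"
    by (simp add: inner_sum_right)
  also have "\<dots> > 0" using k2 pos assms(4) by (intro sum_pos) auto
  finally show False using assms(5) by simp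
qed

end
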